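(* Let $\alpha\in\mathbb{R}\setminus\{0\}$, let $h(z)=f_Z(z;\alpha)$ be the $BASLa_2(\alpha)$ density and let $$h_1(z)=\frac{4+8\alpha^2z^2+\alpha^4z^4}{C_2(\alpha)}\cdot\frac12 e^{-|z|},\qquad z\in\mathbb{R}$$ (the symmetric component density). Then $h_1$ is a probability density and $$\sup_{z\in\mathbb{R}}\frac{h(z)}{h_1(z)}=\frac{3+2\sqrt2}{3}.$$
   Context: For $\alpha\in\mathbb{R}$ let $C_2(\alpha)=4(1+4\alpha^2+6\alpha^4)$. A real random variable $Z$ has the Balakrishnan alpha skew Laplace distribution with parameter $\alpha$, written $Z\sim BASLa_2(\alpha)$, if it has probability density $$f_Z(z;\alpha)=\frac{\big[(1-\alpha z)^2+1\big]^2}{C_2(\alpha)}\cdot\frac12 e^{-|z|},\qquad z\in\mathbb{R}.$$ *)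

theory Defs
  imports "HOL-Analysis.Analysis"
begin

definition C2 :: "real \<Rightarrow> real" where
  "C2 \<alpha> = 4 * (1 + 4 * \<alpha>^2 + 6 * \<alpha>^4)"

definition BASLa2_density :: "real \<Rightarrow> real \<Rightarrow> real" where
  "BASLa2_density \<alpha> z = ((1 - \<alpha> * z)^2 + 1)^2 / C2 \<alpha> * (1/2) * exp (- \<bar>z\<bar>)"

definition BASLa2_sym_density :: "real \<Rightarrow> real \<Rightarrow> real" where
  "BASLa2_sym_density \<alpha> z = (4 + 8 * \<alpha>^2 * z^2 + \<alpha>^4 * z^4) / C2 \<alpha> * (1/2) * exp (- \<bar>z\<bar>)"

definition is_prob_density :: "(real \<Rightarrow> real) \<Rightarrow> bool" where
  "is_prob_density f \<longleftrightarrow> (\<forall>z. 0 \<le> f z) \<and> (f has_integral 1) UNIV"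

end

theory Submission
  imports Defs "HOL-Analysis.Analysis"
begin

lemma C2_pos: "C2 a > 0"
  unfolding C2_def by (simp add: add_pos_nonneg)

lemma ratio_eq:
  fixes a z :: real
  shows "BASLa2_density a z / BASLa2_sym_density a z
       = ((1 - a*z)^2 + 1)^2 / (4 + 8*(a*z)^2 + (a*z)^4)"
proof -
  have C: "C2 a > 0" by (rule C2_pos)
  have D: "4 + 8*(a*z)^2 + (a*z)^4 > 0" by (simp add: add_pos_nonneg)
  have gen: "\<And>X Y c e::real. c > 0 \<Longrightarrow> e > 0 \<Longrightarrow> Y > 0 \<Longrightarrow>
      (X / c * (1/2) * e) / (Y / c * (1/2) * e) = X / Y"
    by (simp add: field_simps)
  have eq: "4 + 8 * a^2 * z^2 + a^4 * z^4 = 4 + 8*(a*z)^2 + (a*z)^4"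
    by (simp add: power_mult_distrib)
  show ?thesis
    unfolding BASLa2_density_def BASLa2_sym_density_def eq
    by (rule gen[OF C exp_gt_zero D])
qed

lemma ratio_bound:
  fixes t :: real
  shows "((1 - t)^2 + 1)^2 / (4 + 8*t^2 + t^4) \<le> (3 + 2 * sqrt 2) / 3"
proof -
  have D: "4 + 8*t^2 + t^4 > 0" by (simp add: add_pos_nonneg)
  have s2: "sqrt 2 ^ 2 = (2::real)" by simp
  have id: "(3 + 2 * sqrt 2) * (4 + 8*t^2 + t^4) - 3 * ((1 - t)^2 + 1)^2
       = 2 * sqrt 2 * (t + sqrt 2)^2 * (t^2 + sqrt 2 * t + 2)"
  proof -
    have "sqrt 2 ^ 3 = 2 * sqrt (2::real)" by (simp add: power3_eq_cube)
    then show ?thesis by (simp add: algebra_simps power2_eq_square power3_eq_cube power4_eq_xxxx)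
  qed
  have q: "t^2 + sqrt 2 * t + 2 > 0"
  proof -
    have "t^2 + sqrt 2 * t + 2 = (t + sqrt 2 / 2)^2 + 3/2"
      by (simp add: algebra_simps power2_eq_square)
    then show ?thesis using zero_le_power2[of "t + sqrt 2 / 2"] by linarith
  qed
  have "0 \<le> 2 * sqrt 2 * (t + sqrt 2)^2 * (t^2 + sqrt 2 * t + 2)"
    using q by simp
  then have "3 * ((1 - t)^2 + 1)^2 \<le> (3 + 2 * sqrt 2) * (4 + 8*t^2 + t^4)"
    using id by linarith
  then show ?thesis using D by (simp add: field_simps)
qed

lemma ratio_attain:
  "((1 - (- sqrt 2))^2 + 1)^2 / (4 + 8*(- sqrt 2)^2 + (- sqrt 2)^4) = (3 + 2 * sqrt (2::real)) / 3"
proof -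
  have s2: "sqrt 2 ^ 2 = (2::real)" by simp
  have s4: "sqrt 2 ^ 4 = (4::real)" using s2 by (metis power_mult num_double numeral_times_numeral power2_eq_square numeral_Bit0 mult_2)
  have "((1 - (- sqrt 2))^2 + 1)^2 = (24 + 16 * sqrt (2::real))"
    by (simp add: power2_eq_square algebra_simps)
  moreover have "(4 + 8*(- sqrt 2)^2 + (- sqrt 2)^4) = (24::real)"
    using s2 s4 by simp
  ultimately show ?thesis by simp
qed

lemma pow_exp_integral:
  fixes k :: nat
  shows "((\<lambda>t::real. t ^ k * exp (- t)) has_integral fact k) {0..}"
proof -
  have "((\<lambda>t::real. t powr (real (k+1) - 1) / exp t) has_integral Gamma (real (k+1))) {0..}"
    by (rule Gamma_integral_real) simp
  moreover have "Gamma (real (k+1)) = fact k"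
    using Gamma_fact[of k] by (simp add: add.commute)
  ultimately have A: "((\<lambda>t::real. t powr (real k) / exp t) has_integral fact k) {0..}"
    by simp
  show ?thesis
  proof (rule has_integral_spike_finite[OF _ _ A, of "{0}"])
    fix x :: real assume "x \<in> {0..} - {0}"
    then have "x > 0" by auto
    then show "x ^ k * exp (- x) = x powr real k / exp x"
      by (simp add: powr_realpow exp_minus field_simps)
  qed simp
qed

definition gg :: "real \<Rightarrow> real \<Rightarrow> real" where
  "gg a t = (4 + 8 * a^2 * t^2 + a^4 * t^4) / C2 a * (1/2) * exp (- t)"

lemma gg_integral: "(gg a has_integral 1/2) {0..}"
proof -
  have I0: "((\<lambda>t::real. t ^ 0 * exp (- t)) has_integral fact 0) {0..}" by (rule pow_exp_integral)
  have I2: "((\<lambda>t::real. t ^ 2 * exp (- t)) has_integral fact 2) {0..}" by (rule pow_exp_integral)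
  have I4: "((\<lambda>t::real. t ^ 4 * exp (- t)) has_integral fact 4) {0..}" by (rule pow_exp_integral)
  have "((\<lambda>t. 4 * (t ^ 0 * exp (- t)) + (8 * a^2) * (t ^ 2 * exp (- t)) + a^4 * (t ^ 4 * exp (- t)))
      has_integral (4 * fact 0 + (8 * a^2) * fact 2 + a^4 * fact 4)) {0..}"
    by (intro has_integral_add has_integral_mult_right I0 I2 I4)
  then have H: "((\<lambda>t. (1 / (2 * C2 a)) * (4 * (t ^ 0 * exp (- t)) + (8 * a^2) * (t ^ 2 * exp (- t)) + a^4 * (t ^ 4 * exp (- t))))
      has_integral (1 / (2 * C2 a)) * (4 * fact 0 + (8 * a^2) * fact 2 + a^4 * fact 4)) {0..}"
    by (rule has_integral_mult_right)
  have V: "(1 / (2 * C2 a)) * (4 * fact 0 + (8 * a^2) * fact 2 + a^4 * fact 4) = (1/2::real)"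
  proof -
    have f4: "(fact 4::real) = 24" and f2: "(fact 2::real) = 2" by (simp_all add: eval_nat_numeral)
    show ?thesis using C2_pos[of a] by (simp add: C2_def f4 f2 field_simps)
  qed
  have E: "(\<lambda>t. (1 / (2 * C2 a)) * (4 * (t ^ 0 * exp (- t)) + (8 * a^2) * (t ^ 2 * exp (- t)) + a^4 * (t ^ 4 * exp (- t)))) = gg a"
    by (rule ext) (simp add: gg_def field_simps)
  show ?thesis using H unfolding V E .
qed

lemma sym_integral: "(BASLa2_sym_density a has_integral 1) UNIV"
proof -
  have eqg: "BASLa2_sym_density a x = gg a x" if "x \<in> {0..}" for x
    using that by (simp add: BASLa2_sym_density_def gg_def)
  have R: "(BASLa2_sym_density a has_integral 1/2) {0..}"
    using gg_integral[of a] has_integral_spike_finite[of "{}" "{0..}" "BASLa2_sym_density a" "gg a"] eqg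
    by auto
  have nn: "0 \<le> BASLa2_sym_density a x" for x
    using C2_pos[of a] by (simp add: BASLa2_sym_density_def add_nonneg_nonneg)
  have absR: "BASLa2_sym_density a absolutely_integrable_on {0..}"
    using R nn by (intro nonnegative_absolutely_integrable_1) (auto simp: has_integral_integrable)
  have intR: "integral {0..} (BASLa2_sym_density a) = 1/2"
    using R by (rule integral_unique)
  have refl: "(\<lambda>x. BASLa2_sym_density a (-x)) absolutely_integrable_on {..0} \<and>
       integral {..0} (\<lambda>x. BASLa2_sym_density a (-x)) = 1/2"
    by (subst has_absolute_integral_reflect_real[where B="{0..}"]) (use absR intR in auto)
  have ev: "(\<lambda>x. BASLa2_sym_density a (-x)) = BASLa2_sym_density a"
    by (rule ext) (simp add: BASLa2_sym_density_def)
  have L: "(BASLa2_sym_density a has_integral 1/2) {..0}"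
    using refl unfolding ev
    by (metis absolutely_integrable_on_def has_integral_integral)
  have "(BASLa2_sym_density a has_integral (1/2 + 1/2)) ({..0} \<union> {0..})"
    by (rule has_integral_Un[OF L R]) (simp add: atMost_Int_atLeast)
  moreover have "{..0} \<union> {0..} = (UNIV::real set)" by auto
  ultimately show ?thesis by simp
qed

theorem mainTheorem9:
  fixes \<alpha> :: real
  assumes "\<alpha> \<noteq> 0"
  shows "is_prob_density (BASLa2_sym_density \<alpha>)
       \<and> (SUP z\<in>(UNIV::real set). BASLa2_density \<alpha> z / BASLa2_sym_density \<alpha> z)
           = (3 + 2 * sqrt 2) / 3"
proof
  show "is_prob_density (BASLa2_sym_density \<alpha>)"
    unfolding is_prob_density_def
    using sym_integral[of \<alpha>] C2_pos[of \<alpha>]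
    by (auto simp: BASLa2_sym_density_def add_nonneg_nonneg)
  let ?f = "\<lambda>z. BASLa2_density \<alpha> z / BASLa2_sym_density \<alpha> z"
  have mem: "(3 + 2 * sqrt 2) / 3 \<in> ?f ` UNIV"
  proof
    have "\<alpha> * (- sqrt 2 / \<alpha>) = - sqrt 2" using assms by simp
    then show "(3 + 2 * sqrt 2) / 3 = ?f (- sqrt 2 / \<alpha>)"
      unfolding ratio_eq using ratio_attain by simp
  qed simp
  have ub: "\<And>x. x \<in> ?f ` UNIV \<Longrightarrow> x \<le> (3 + 2 * sqrt 2) / 3"
    unfolding ratio_eq using ratio_bound by auto
  show "(SUP z\<in>(UNIV::real set). ?f z) = (3 + 2 * sqrt 2) / 3"
    by (rule cSup_eq_maximum[OF mem ub])
qed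

end
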